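(* Let $c_1,c_2\in\mathbb{R}$ with $c_1c_2\neq0$, let $c_{2k-1}=c_1$, $c_{2k}=c_2$ for $k\in\mathbb{N}$, and let $J$ be the self-adjoint operator in $l^2(\mathbb{N})$ given by the Jacobi matrix with diagonal entries $q_n=n$ and off-diagonal entries $\lambda_n=c_nn$, i.e. $(Ju)_1=u_1+c_1u_2$, $(Ju)_n=\lambda_{n-1}u_{n-1}+nu_n+\lambda_nu_{n+1}$ for $n\ge2$, on its natural domain $\{u\in l^2(\mathbb{N}):Ju\in l^2(\mathbb{N})\}$. Then: 1. If $|c_1|+|c_2|>1$, the operator $J$ is not semibounded. 2. If $|c_1|+|c_2|\le1$, the operator $J$ is semibounded from below. *)

theory Defs
  imports Complex_Main
begin

text \<open>Sequences in l^2(N) are modelled as functions nat => real, where index k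
  corresponds to the paper's index n = k + 1 (so N = {1,2,...} is shifted to {0,1,...}).\<close>

definition ell2 :: "(nat \<Rightarrow> real) \<Rightarrow> bool" where
  "ell2 u \<longleftrightarrow> summable (\<lambda>k. (u k)\<^sup>2)"

text \<open>Periodic coefficients: c_n = c1 for odd n, c2 for even n; with n = k + 1.\<close>
definition jcoef :: "real \<Rightarrow> real \<Rightarrow> nat \<Rightarrow> real" where
  "jcoef c1 c2 k = (if even k then c1 else c2)"

definition jlam :: "real \<Rightarrow> real \<Rightarrow> nat \<Rightarrow> real" where
  "jlam c1 c2 k = jcoef c1 c2 k * real (k + 1)"

definition jac_apply :: "real \<Rightarrow> real \<Rightarrow> (nat \<Rightarrow> real) \<Rightarrow> nat \<Rightarrow> real" where
  "jac_apply c1 c2 u k =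
     (if k = 0 then 0 else jlam c1 c2 (k - 1) * u (k - 1))
     + real (k + 1) * u k + jlam c1 c2 k * u (k + 1)"

definition jac_dom :: "real \<Rightarrow> real \<Rightarrow> (nat \<Rightarrow> real) set" where
  "jac_dom c1 c2 = {u. ell2 u \<and> ell2 (jac_apply c1 c2 u)}"

definition semibounded_below :: "real \<Rightarrow> real \<Rightarrow> bool" where
  "semibounded_below c1 c2 \<longleftrightarrow> (\<exists>C. \<forall>u\<in>jac_dom c1 c2.
      C * (\<Sum>k. (u k)\<^sup>2) \<le> (\<Sum>k. jac_apply c1 c2 u k * u k))"

definition semibounded_above :: "real \<Rightarrow> real \<Rightarrow> bool" where
  "semibounded_above c1 c2 \<longleftrightarrow> (\<exists>C. \<forall>u\<in>jac_dom c1 c2.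
      (\<Sum>k. jac_apply c1 c2 u k * u k) \<le> C * (\<Sum>k. (u k)\<^sup>2))"

definition semibounded :: "real \<Rightarrow> real \<Rightarrow> bool" where
  "semibounded c1 c2 \<longleftrightarrow> semibounded_below c1 c2 \<or> semibounded_above c1 c2"

end

theory Submission
  imports Defs "HOL-Analysis.Summation_Tests"
begin


fun sg :: "real \<Rightarrow> real \<Rightarrow> nat \<Rightarrow> real" where
  "sg c1 c2 0 = 1"
| "sg c1 c2 (Suc k) = - sgn (jcoef c1 c2 k) * sg c1 c2 k"

definition tv :: "real \<Rightarrow> real \<Rightarrow> nat \<Rightarrow> nat \<Rightarrow> nat \<Rightarrow> real" where
  "tv c1 c2 m p k = (if 2*m \<le> k \<and> k \<le> 2*m+2*p then sg c1 c2 k else 0)"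

lemma jcoef_nz: "c1 \<noteq> 0 \<Longrightarrow> c2 \<noteq> 0 \<Longrightarrow> jcoef c1 c2 k \<noteq> 0"
  by (simp add: jcoef_def)

lemma sg_sq: assumes "c1 \<noteq> 0" "c2 \<noteq> 0" shows "sg c1 c2 k * sg c1 c2 k = 1"
proof (induction k)
  case (Suc k)
  have "sgn (jcoef c1 c2 k) * sgn (jcoef c1 c2 k) = 1"
    using jcoef_nz[OF assms, of k] by (simp add: sgn_if)
  then show ?case using Suc by (simp add: algebra_simps)
qed simp

lemma sg_edge: assumes "c1 \<noteq> 0" "c2 \<noteq> 0"
  shows "jcoef c1 c2 k * sg c1 c2 k * sg c1 c2 (Suc k) = - \<bar>jcoef c1 c2 k\<bar>"
proof -
  have "jcoef c1 c2 k * sg c1 c2 k * sg c1 c2 (Suc k)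
      = - (jcoef c1 c2 k * sgn (jcoef c1 c2 k)) * (sg c1 c2 k * sg c1 c2 k)"
    by (simp add: algebra_simps)
  also have "\<dots> = - \<bar>jcoef c1 c2 k\<bar>" using sg_sq[OF assms, of k]
    by (simp add: sgn_if abs_if)
  finally show ?thesis .
qed

lemma T_eq:
  assumes "c1 \<noteq> 0" "c2 \<noteq> 0" and k: "2*m \<le> k" "k \<le> 2*m+2*p"
  shows "jac_apply c1 c2 (tv c1 c2 m p) k * tv c1 c2 m p k =
     real (k+1) - (if 2*m+1 \<le> k then \<bar>jcoef c1 c2 (k-1)\<bar> * real k else 0)
       - (if k+1 \<le> 2*m+2*p then \<bar>jcoef c1 c2 k\<bar> * real (k+1) else 0)"
proof -
  let ?s = "sg c1 c2"
  have tk: "tv c1 c2 m p k = ?s k" using k by (simp add: tv_def)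
  have t1: "(if k = 0 then 0 else jlam c1 c2 (k - 1) * tv c1 c2 m p (k - 1)) * ?s k
      = - (if 2*m+1 \<le> k then \<bar>jcoef c1 c2 (k-1)\<bar> * real k else 0)"
  proof (cases "2*m+1 \<le> k")
    case True
    then obtain j where j: "k = Suc j" "2*m \<le> j" by (cases k) auto
    have "jlam c1 c2 j * ?s j * ?s (Suc j) = (jcoef c1 c2 j * ?s j * ?s (Suc j)) * real (Suc j)"
      by (simp add: jlam_def algebra_simps)
    also have "\<dots> = - \<bar>jcoef c1 c2 j\<bar> * real (Suc j)"
      using sg_edge[OF assms(1,2), of j] by simp
    finally show ?thesis using True j k
      by (simp add: tv_def del: sg.simps)
  next
    case False
    then show ?thesis using k by (auto simp: tv_def)
  qed
  have t3: "jlam c1 c2 k * tv c1 c2 m p (k + 1) * ?s k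
      = - (if k+1 \<le> 2*m+2*p then \<bar>jcoef c1 c2 k\<bar> * real (k+1) else 0)"
  proof (cases "k+1 \<le> 2*m+2*p")
    case True
    have "jlam c1 c2 k * ?s (Suc k) * ?s k = (jcoef c1 c2 k * ?s k * ?s (Suc k)) * real (Suc k)"
      by (simp add: jlam_def algebra_simps)
    also have "\<dots> = - \<bar>jcoef c1 c2 k\<bar> * real (Suc k)"
      using sg_edge[OF assms(1,2), of k] by simp
    finally show ?thesis using True k
      by (simp add: tv_def del: sg.simps)
  next
    case False
    then show ?thesis using k by (auto simp: tv_def)
  qed
  have "jac_apply c1 c2 (tv c1 c2 m p) k * tv c1 c2 m p k
     = (if k = 0 then 0 else jlam c1 c2 (k - 1) * tv c1 c2 m p (k - 1)) * ?s k
       + real (k+1) * (?s k * ?s k) + jlam c1 c2 k * tv c1 c2 m p (k + 1) * ?s k"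
    unfolding jac_apply_def tk by (simp add: algebra_simps)
  then show ?thesis using t1 t3 sg_sq[OF assms(1,2), of k] by simp
qed

lemma abs_jcoef_sum: "\<bar>jcoef c1 c2 k\<bar> + \<bar>jcoef c1 c2 (Suc k)\<bar> = \<bar>c1\<bar> + \<bar>c2\<bar>"
  by (simp add: jcoef_def)

lemma tv_zero: "k \<notin> {2*m..2*m+2*p} \<Longrightarrow> tv c1 c2 m p k = 0"
  by (auto simp: tv_def)

lemma tv_dom: assumes "c1 \<noteq> 0" "c2 \<noteq> 0" shows "tv c1 c2 m p \<in> jac_dom c1 c2"
proof -
  have "ell2 (tv c1 c2 m p)" unfolding ell2_def
    by (rule summable_finite[of "{2*m..2*m+2*p}"]) (auto simp: tv_zero)
  moreover have "ell2 (jac_apply c1 c2 (tv c1 c2 m p))" unfolding ell2_def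
    by (rule summable_finite[of "{..2*m+2*p+1}"]) (auto simp: jac_apply_def tv_def)
  ultimately show ?thesis by (simp add: jac_dom_def)
qed

lemma norm_tv: assumes "c1 \<noteq> 0" "c2 \<noteq> 0"
  shows "(\<Sum>k. (tv c1 c2 m p k)\<^sup>2) = real (2*p+1)"
proof -
  have "(\<Sum>k. (tv c1 c2 m p k)\<^sup>2) = (\<Sum>k\<in>{2*m..2*m+2*p}. (tv c1 c2 m p k)\<^sup>2)"
    by (rule suminf_finite) (auto simp: tv_zero)
  also have "\<dots> = (\<Sum>k\<in>{2*m..2*m+2*p}. 1)"
    by (rule sum.cong) (auto simp: tv_def power2_eq_square sg_sq[OF assms])
  finally show ?thesis by simp
qed

lemma Q_eq: "(\<Sum>k. jac_apply c1 c2 (tv c1 c2 m p) k * tv c1 c2 m p k)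
   = (\<Sum>k\<in>{2*m..2*m+2*p}. jac_apply c1 c2 (tv c1 c2 m p) k * tv c1 c2 m p k)"
  by (rule suminf_finite) (auto simp: tv_zero)

lemma Q0: assumes "c1 \<noteq> 0" "c2 \<noteq> 0"
  shows "(\<Sum>k. jac_apply c1 c2 (tv c1 c2 m 0) k * tv c1 c2 m 0 k) = real (2*m+1)"
  unfolding Q_eq using T_eq[OF assms, of m "2*m" 0] by simp

lemma Qbound: assumes "c1 \<noteq> 0" "c2 \<noteq> 0" and ab: "\<bar>c1\<bar> + \<bar>c2\<bar> > 1"
  shows "(\<Sum>k. jac_apply c1 c2 (tv c1 c2 m (Suc q)) k * tv c1 c2 m (Suc q) k)
    \<le> 2 * real (2*m+2*q+3) + real (2*q+1) * (1 - 2 * (\<bar>c1\<bar> + \<bar>c2\<bar> - 1) * real m)"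
proof -
  let ?T = "\<lambda>k. jac_apply c1 c2 (tv c1 c2 m (Suc q)) k * tv c1 c2 m (Suc q) k"
  let ?d = "\<bar>c1\<bar> + \<bar>c2\<bar> - 1"
  have up: "?T k \<le> real (k+1)" if "2*m \<le> k" "k \<le> 2*m+2*Suc q" for k
  proof -
    have a: "(if 2*m+1 \<le> k then \<bar>jcoef c1 c2 (k-1)\<bar> * real k else 0) \<ge> 0" by simp
    have b: "(if k+1 \<le> 2*m+2*Suc q then \<bar>jcoef c1 c2 k\<bar> * real (k+1) else 0) \<ge> 0" by simp
    show ?thesis using T_eq[OF assms(1,2) that] a b by linarith
  qed
  have int: "?T k \<le> 1 - 2 * ?d * real m" if h: "2*m+1 \<le> k" "k \<le> 2*m+2*q+1" for k
  proof -
    obtain j where j: "k = Suc j" using h(1) by (cases k) auto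
    have "?T k = real (k+1) - \<bar>jcoef c1 c2 j\<bar> * real k - \<bar>jcoef c1 c2 k\<bar> * real (k+1)"
      using T_eq[OF assms(1,2), of m k "Suc q"] h j by simp
    also have "\<dots> \<le> real (k+1) - (\<bar>jcoef c1 c2 j\<bar> + \<bar>jcoef c1 c2 k\<bar>) * real k"
      by (simp add: algebra_simps)
    also have "\<dots> = 1 - ?d * real k" using abs_jcoef_sum[of c1 c2 j] j by (simp add: algebra_simps)
    also have "\<dots> \<le> 1 - ?d * real (2*m)"
      using ab h by (intro diff_left_mono mult_left_mono) auto
    finally show ?thesis by (simp add: algebra_simps)
  qed
  have "(\<Sum>k\<in>{2*m..2*m+2*Suc q}. ?T k) = ?T (2*m) + (\<Sum>k\<in>{Suc (2*m)..2*m+2*Suc q}. ?T k)"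
    by (rule sum.atLeast_Suc_atMost) simp
  also have "{Suc (2*m)..2*m+2*Suc q} = {Suc (2*m)..Suc (2*m+2*q+1)}" by simp
  also have "(\<Sum>k\<in>{Suc (2*m)..Suc (2*m+2*q+1)}. ?T k) = (\<Sum>k\<in>{Suc (2*m)..2*m+2*q+1}. ?T k) + ?T (2*m+2*q+2)"
    by simp
  also have "(\<Sum>k\<in>{Suc (2*m)..2*m+2*q+1}. ?T k) \<le> (\<Sum>k\<in>{Suc (2*m)..2*m+2*q+1}. 1 - 2 * ?d * real m)"
  proof (rule sum_mono)
    fix k assume "k \<in> {Suc (2*m)..2*m+2*q+1}"
    then show "?T k \<le> 1 - 2 * ?d * real m" using int[of k] by simp
  qed
  also have "\<dots> = real (2*q+1) * (1 - 2 * ?d * real m)" by simp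
  finally have "(\<Sum>k\<in>{2*m..2*m+2*Suc q}. ?T k) \<le> ?T (2*m) + real (2*q+1) * (1 - 2 * ?d * real m) + ?T (2*m+2*q+2)"
    by simp
  moreover have "?T (2*m) \<le> real (2*m+2*q+3)" using up[of "2*m"] by simp
  moreover have "?T (2*m+2*q+2) \<le> real (2*m+2*q+3)" using up[of "2*m+2*q+2"] by simp
  ultimately show ?thesis unfolding Q_eq by simp
qed





lemma abs_jcoef_le: "\<bar>jcoef c1 c2 k\<bar> \<le> \<bar>c1\<bar> + \<bar>c2\<bar>"
  by (simp add: jcoef_def)

lemma summable_prod_ell2:
  assumes "ell2 u" "ell2 v" shows "summable (\<lambda>k. v k * u k)"
proof (rule summable_comparison_test[of _ "\<lambda>k. ((v k)\<^sup>2 + (u k)\<^sup>2) / 2"])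
  show "\<exists>N. \<forall>n\<ge>N. norm (v n * u n) \<le> ((v n)\<^sup>2 + (u n)\<^sup>2) / 2"
  proof (intro exI allI impI)
    fix n
    have "2 * \<bar>v n\<bar> * \<bar>u n\<bar> \<le> (v n)\<^sup>2 + (u n)\<^sup>2"
      using sum_squares_bound[of "\<bar>v n\<bar>" "\<bar>u n\<bar>"] by (simp add: power2_eq_square)
    then show "norm (v n * u n) \<le> ((v n)\<^sup>2 + (u n)\<^sup>2) / 2" by (simp add: abs_mult)
  qed
  show "summable (\<lambda>k. ((v k)\<^sup>2 + (u k)\<^sup>2) / 2)"
    using assms unfolding ell2_def by (intro summable_divide summable_add)
qed

lemma invariant:
  assumes ab: "\<bar>c1\<bar> + \<bar>c2\<bar> \<le> 1"
  shows "(\<Sum>k<Suc N. jac_apply c1 c2 u k * u k) - jlam c1 c2 N * u N * u (Suc N)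
     \<ge> (real (N+1) - (if N = 0 then 0 else \<bar>jlam c1 c2 (N-1)\<bar>)) * (u N)\<^sup>2"
proof (induction N)
  case 0
  then show ?case by (simp add: jac_apply_def power2_eq_square algebra_simps)
next
  case (Suc N)
  let ?l = "jlam c1 c2 N"
  let ?b = "real (N+1) - (if N = 0 then 0 else \<bar>jlam c1 c2 (N-1)\<bar>)"
  have bge: "?b \<ge> \<bar>?l\<bar>"
  proof (cases N)
    case 0
    then show ?thesis using abs_jcoef_le[of c1 c2 0] ab by (simp add: jlam_def)
  next
    case (Suc M)
    have e1: "\<bar>jlam c1 c2 M\<bar> = \<bar>jcoef c1 c2 M\<bar> * real (M+1)"
      by (simp add: jlam_def abs_mult)
    have e2: "\<bar>jlam c1 c2 (Suc M)\<bar> = \<bar>jcoef c1 c2 (Suc M)\<bar> * real (M+2)"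
      by (simp add: jlam_def abs_mult)
    have s: "\<bar>jcoef c1 c2 M\<bar> + \<bar>jcoef c1 c2 (Suc M)\<bar> \<le> 1" using abs_jcoef_sum[of c1 c2 M] ab by simp
    have "\<bar>jcoef c1 c2 M\<bar> * real (M+1) + \<bar>jcoef c1 c2 (Suc M)\<bar> * real (M+2)
       \<le> (\<bar>jcoef c1 c2 M\<bar> + \<bar>jcoef c1 c2 (Suc M)\<bar>) * real (M+2)"
      by (simp add: algebra_simps)
    also have "\<dots> \<le> real (M+2)" using s by (simp add: mult_left_le_one_le)
    finally show ?thesis using Suc e1 e2 by simp
  qed
  have q: "?b * x\<^sup>2 + 2 * ?l * x * y + \<bar>?l\<bar> * y\<^sup>2 \<ge> 0" for x y :: real
  proof -
    have "\<bar>?l\<bar> * x\<^sup>2 + 2 * ?l * x * y + \<bar>?l\<bar> * y\<^sup>2 \<ge> 0"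
    proof (cases "?l \<ge> 0")
      case True
      then have "\<bar>?l\<bar> * x\<^sup>2 + 2 * ?l * x * y + \<bar>?l\<bar> * y\<^sup>2 = ?l * (x+y)\<^sup>2"
        by (simp add: power2_eq_square algebra_simps)
      then show ?thesis using True by simp
    next
      case False
      then have "\<bar>?l\<bar> * x\<^sup>2 + 2 * ?l * x * y + \<bar>?l\<bar> * y\<^sup>2 = (-?l) * (x-y)\<^sup>2"
        by (simp add: power2_eq_square algebra_simps)
      moreover have "(-?l) * (x-y)\<^sup>2 \<ge> 0" using False by (simp add: mult_nonpos_nonneg)
      ultimately show ?thesis by linarith
    qed
    moreover have "?b * x\<^sup>2 \<ge> \<bar>?l\<bar> * x\<^sup>2" using bge by (simp add: mult_right_mono)
    ultimately show ?thesis by linarith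
  qed
  have step: "(\<Sum>k<Suc (Suc N). jac_apply c1 c2 u k * u k) - jlam c1 c2 (Suc N) * u (Suc N) * u (Suc (Suc N))
    = ((\<Sum>k<Suc N. jac_apply c1 c2 u k * u k) - ?l * u N * u (Suc N)) + 2 * ?l * u N * u (Suc N) + real (N+2) * (u (Suc N))\<^sup>2"
    by (simp add: jac_apply_def power2_eq_square algebra_simps)
  have "real (Suc N + 1) - (if Suc N = 0 then 0 else \<bar>jlam c1 c2 (Suc N - 1)\<bar>) = real (N+2) - \<bar>?l\<bar>" by simp
  moreover have "((\<Sum>k<Suc N. jac_apply c1 c2 u k * u k) - ?l * u N * u (Suc N)) + 2 * ?l * u N * u (Suc N) + real (N+2) * (u (Suc N))\<^sup>2
     \<ge> (real (N+2) - \<bar>?l\<bar>) * (u (Suc N))\<^sup>2"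
    using Suc.IH q[of "u N" "u (Suc N)"] by (simp add: algebra_simps)
  ultimately show ?case using step by simp
qed

lemma summable_abs_prod_ell2:
  assumes "ell2 u" "ell2 v" shows "summable (\<lambda>k. \<bar>v k * u k\<bar>)"
proof (rule summable_comparison_test[of _ "\<lambda>k. ((v k)\<^sup>2 + (u k)\<^sup>2) / 2"])
  show "\<exists>N. \<forall>n\<ge>N. norm \<bar>v n * u n\<bar> \<le> ((v n)\<^sup>2 + (u n)\<^sup>2) / 2"
  proof (intro exI allI impI)
    fix n
    have "2 * \<bar>v n\<bar> * \<bar>u n\<bar> \<le> (v n)\<^sup>2 + (u n)\<^sup>2"
      using sum_squares_bound[of "\<bar>v n\<bar>" "\<bar>u n\<bar>"] by (simp add: power2_eq_square)
    then show "norm \<bar>v n * u n\<bar> \<le> ((v n)\<^sup>2 + (u n)\<^sup>2) / 2" by (simp add: abs_mult)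
  qed
  show "summable (\<lambda>k. ((v k)\<^sup>2 + (u k)\<^sup>2) / 2)"
    using assms unfolding ell2_def by (intro summable_divide summable_add)
qed

lemma part2:
  assumes ab: "\<bar>c1\<bar> + \<bar>c2\<bar> \<le> 1" and u: "u \<in> jac_dom c1 c2"
  shows "0 \<le> (\<Sum>k. jac_apply c1 c2 u k * u k)"
proof (rule ccontr)
  let ?J = "jac_apply c1 c2 u"
  define S where "S = (\<Sum>k. ?J k * u k)"
  assume "\<not> 0 \<le> (\<Sum>k. jac_apply c1 c2 u k * u k)"
  then have Sneg: "S < 0" by (simp add: S_def)
  have eu: "ell2 u" and eJ: "ell2 ?J" using u by (auto simp: jac_dom_def)
  have "summable (\<lambda>k. ?J k * u k)" using summable_prod_ell2[OF eu eJ] .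
  then have lim: "(\<lambda>N. \<Sum>k<Suc N. ?J k * u k) \<longlonglongrightarrow> S"
    unfolding S_def by (intro LIMSEQ_Suc summable_LIMSEQ)
  have esh: "ell2 (\<lambda>k. u (Suc k))" using eu unfolding ell2_def
    by (subst summable_Suc_iff[where f="\<lambda>k. (u k)\<^sup>2"])
  have asum: "summable (\<lambda>N. \<bar>u (Suc N) * u N\<bar>)"
    using summable_abs_prod_ell2[OF eu esh] .
  have low: "(\<Sum>k<Suc N. ?J k * u k) \<ge> - (real (N+1) * \<bar>u (Suc N) * u N\<bar>)" for N
  proof -
    have inv: "(\<Sum>k<Suc N. ?J k * u k) - jlam c1 c2 N * u N * u (Suc N)
       \<ge> (real (N+1) - (if N = 0 then 0 else \<bar>jlam c1 c2 (N-1)\<bar>)) * (u N)\<^sup>2"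
      using invariant[OF ab] .
    have bnn: "real (N+1) - (if N = 0 then 0 else \<bar>jlam c1 c2 (N-1)\<bar>) \<ge> 0"
    proof (cases N)
      case (Suc M)
      have "\<bar>jlam c1 c2 M\<bar> = \<bar>jcoef c1 c2 M\<bar> * real (M+1)" by (simp add: jlam_def abs_mult)
      also have "\<dots> \<le> 1 * real (M+1)"
        using abs_jcoef_le[of c1 c2 M] ab by (intro mult_right_mono) auto
      finally show ?thesis using Suc by simp
    qed simp
    have "(real (N+1) - (if N = 0 then 0 else \<bar>jlam c1 c2 (N-1)\<bar>)) * (u N)\<^sup>2 \<ge> 0"
      using bnn by simp
    have l: "\<bar>jlam c1 c2 N\<bar> \<le> real (N+1)"
    proof -
      have "\<bar>jlam c1 c2 N\<bar> = \<bar>jcoef c1 c2 N\<bar> * real (N+1)" by (simp add: jlam_def abs_mult)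
      also have "\<dots> \<le> 1 * real (N+1)"
        using abs_jcoef_le[of c1 c2 N] ab by (intro mult_right_mono) auto
      finally show ?thesis by simp
    qed
    have "- (jlam c1 c2 N * u N * u (Suc N)) \<le> \<bar>jlam c1 c2 N\<bar> * \<bar>u (Suc N) * u N\<bar>"
    proof -
      have "- (jlam c1 c2 N * u N * u (Suc N)) \<le> \<bar>jlam c1 c2 N * u N * u (Suc N)\<bar>" by simp
      also have "\<dots> = \<bar>jlam c1 c2 N\<bar> * \<bar>u (Suc N) * u N\<bar>" by (simp add: abs_mult)
      finally show ?thesis .
    qed
    also have "\<dots> \<le> real (N+1) * \<bar>u (Suc N) * u N\<bar>"
      using l by (intro mult_right_mono) auto
    finally show ?thesis using inv bnn
      by (smt (verit, best) mult_nonneg_nonneg zero_le_power2)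
  qed
  define e where "e = - S / 2"
  have epos: "e > 0" using Sneg by (simp add: e_def)
  have ev: "eventually (\<lambda>N. (\<Sum>k<Suc N. ?J k * u k) < S / 2) sequentially"
    using order_tendstoD(2)[OF lim, of "S/2"] Sneg by linarith
  have ev2: "eventually (\<lambda>N. norm (e * inverse (real (Suc N))) \<le> \<bar>u (Suc N) * u N\<bar>) sequentially"
    using ev
  proof eventually_elim
    case (elim N)
    then have "e < real (N+1) * \<bar>u (Suc N) * u N\<bar>" using low[of N] by (simp add: e_def)
    then show ?case using epos by (simp add: field_simps)
  qed
  have "summable (\<lambda>N. e * inverse (real (Suc N)))"
    by (rule summable_comparison_test_ev[OF ev2 asum])
  then have "summable (\<lambda>N. inverse (real (Suc N)))" using epos by simp
  then have "summable (\<lambda>N. inverse (real N))"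
    using summable_Suc_iff[where f="\<lambda>N. inverse (real N)"] by simp
  then show False using not_summable_harmonic[where 'a=real] by simp
qed


theorem theorem2:
  fixes c1 c2 :: real
  assumes "c1 * c2 \<noteq> 0"
  shows "(\<bar>c1\<bar> + \<bar>c2\<bar> > 1 \<longrightarrow> \<not> semibounded c1 c2)
       \<and> (\<bar>c1\<bar> + \<bar>c2\<bar> \<le> 1 \<longrightarrow> semibounded_below c1 c2)"
proof (intro conjI impI)
  have nz: "c1 \<noteq> 0" "c2 \<noteq> 0" using assms by auto
  show "semibounded_below c1 c2" if ab: "\<bar>c1\<bar> + \<bar>c2\<bar> \<le> 1"
    unfolding semibounded_below_def using part2[OF ab] by (intro exI[of _ 0]) auto
  assume ab: "\<bar>c1\<bar> + \<bar>c2\<bar> > 1"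
  have na: "\<not> semibounded_above c1 c2"
  proof
    assume "semibounded_above c1 c2"
    then obtain C where C: "\<And>u. u \<in> jac_dom c1 c2 \<Longrightarrow>
      (\<Sum>k. jac_apply c1 c2 u k * u k) \<le> C * (\<Sum>k. (u k)\<^sup>2)"
      unfolding semibounded_above_def by blast
    define m where "m = nat \<lceil>C\<rceil>"
    have "real (2*m+1) \<le> C * real (2*0+1)"
      using C[OF tv_dom[OF nz, of m 0]] Q0[OF nz, of m] norm_tv[OF nz, of m 0] by simp
    moreover have "C \<le> real m" unfolding m_def by linarith
    ultimately show False by simp
  qed
  have nb: "\<not> semibounded_below c1 c2"
  proof
    assume "semibounded_below c1 c2"
    then obtain C where C: "\<And>u. u \<in> jac_dom c1 c2 \<Longrightarrow>
      C * (\<Sum>k. (u k)\<^sup>2) \<le> (\<Sum>k. jac_apply c1 c2 u k * u k)"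
      unfolding semibounded_below_def by blast
    define d where "d = \<bar>c1\<bar> + \<bar>c2\<bar> - 1"
    have dpos: "d > 0" using ab by (simp add: d_def)
    define q where "q = nat \<lceil>3 / d\<rceil>"
    have "3 / d \<le> real q" unfolding q_def by linarith
    then have "3 \<le> real q * d" using dpos by (simp add: field_simps)
    then have qd: "3 \<le> real (2*q+1) * d" using dpos by (simp add: algebra_simps)
    define m where "m = nat \<lceil>\<bar>C\<bar> * real (2*q+3) + 6 * real q + 7\<rceil>"
    have mge: "\<bar>C\<bar> * real (2*q+3) + 6 * real q + 7 \<le> real m" unfolding m_def by linarith
    have "C * real (2 * Suc q + 1) \<le> 2 * real (2*m+2*q+3) + real (2*q+1) * (1 - 2 * d * real m)"
      using C[OF tv_dom[OF nz, of m "Suc q"]] Qbound[OF nz ab, of m q] norm_tv[OF nz, of m "Suc q"]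
      by (simp add: d_def)
    moreover have "real (2*q+1) * (2 * d * real m) \<ge> 3 * (2 * real m)"
    proof -
      have "3 * (2 * real m) \<le> (real (2*q+1) * d) * (2 * real m)"
        using qd by (intro mult_right_mono) auto
      then show ?thesis by (simp add: mult_ac)
    qed
    moreover have "- \<bar>C\<bar> * real (2*q+3) \<le> C * real (2*q+3)"
    proof -
      have "- \<bar>C\<bar> \<le> C" by simp
      then have "- \<bar>C\<bar> * real (2*q+3) \<le> C * real (2*q+3)" by (intro mult_right_mono) auto
      then show ?thesis .
    qed
    moreover have cq: "\<bar>C\<bar> * (real q * 2) \<ge> 0" by simp
    ultimately show False using mge by (simp add: algebra_simps) (use cq abs_ge_zero[of C] in linarith)
  qed
  show "\<not> semibounded c1 c2" using na nb unfolding semibounded_def by blast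
qed

end
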